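(* Let $\mathbb{S}=(S,\Sigma,\{\tau_a\mid a\in L\})$ be an LMP, let $\Sigma_0\subseteq\Sigma$ be a sub-$\sigma$-algebra with $\mathcal{R}(\Sigma_0)=\mathcal{R}^T(\Sigma_0)$, and put $R_0=\mathcal{R}(\Sigma_0)$. Then for every limit ordinal $\lambda$, $\Sigma_\lambda$ is a stable $\sigma$-algebra.
   Context: An LMP is a triple $(S,\Sigma,\{\tau_a\mid a\in L\})$ with $(S,\Sigma)$ a measurable space, $L$ countable, and each $\tau_a:S\times\Sigma\to[0,1]$ a Markov kernel (subprobability measure in the second argument, measurable in the first). For $R\subseteq S\times S$, $A$ is $R$-closed if $x\in A$, $xRs$ imply $s\in A$; $\Sigma(R)$ is the family of $R$-closed members of $\Sigma$. For $\Gamma\subseteq\mathcal{P}(S)$, $\mathcal{R}(\Gamma)=\{(s,t):\forall A\in\Gamma\,(s\in A\iff t\in A)\}$; for $\Lambda\subseteq\Sigma$, $\mathcal{R}^T(\Lambda)=\{(s,t):\forall a\in L\,\forall E\in\Lambda\ \tau_a(s,E)=\tau_a(t,E)\}$. $\mathcal{O}(R)=\mathcal{R}^T(\Sigma(R))$, $\mathcal{G}(\Lambda)=\Sigma(\mathcal{R}^T(\Lambda))$. Iterates: $R_{\alpha+1}=\mathcal{O}(R_\alpha)$, $R_\lambda=\bigcap_{\alpha<\lambda}R_\alpha$ for limit $\lambda$; $\Sigma_{\alpha+1}=\mathcal{G}(\Sigma_\alpha)$, $\Sigma_\lambda=\sigma(\bigcup_{\alpha<\lambda}\Sigma_\alpha)$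 for limit $\lambda$. A family $\Lambda\subseteq\Sigma$ is stable if for all $A\in\Lambda$, rational $r\in[0,1]$ and $a\in L$, $\{s:\tau_a(s,A)>r\}\in\Lambda$. *)

theory Defs
  imports "HOL-Probability.Probability"
begin

definition LMP :: "'a measure \<Rightarrow> 'l set \<Rightarrow> ('l \<Rightarrow> 'a \<Rightarrow> 'a measure) \<Rightarrow> bool" where
  "LMP M L \<tau> \<longleftrightarrow> countable L \<and> (\<forall>a\<in>L. \<tau> a \<in> M \<rightarrow>\<^sub>M subprob_algebra M)"

definition Rel_of :: "'a measure \<Rightarrow> 'a set set \<Rightarrow> ('a \<times> 'a) set" where
  "Rel_of M \<Gamma> = {(s,t). s \<in> space M \<and> t \<in> space M \<and> (\<forall>A\<in>\<Gamma>. s \<in> A \<longleftrightarrow> t \<in> A)}"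

definition RelT :: "'a measure \<Rightarrow> 'l set \<Rightarrow> ('l \<Rightarrow> 'a \<Rightarrow> 'a measure) \<Rightarrow> 'a set set \<Rightarrow> ('a \<times> 'a) set" where
  "RelT M L \<tau> \<Lambda> = {(s,t). s \<in> space M \<and> t \<in> space M \<and>
      (\<forall>a\<in>L. \<forall>E\<in>\<Lambda>. measure (\<tau> a s) E = measure (\<tau> a t) E)}"

definition closed_sets :: "'a measure \<Rightarrow> ('a \<times> 'a) set \<Rightarrow> 'a set set" where
  "closed_sets M R = {A \<in> sets M. \<forall>x s. x \<in> A \<longrightarrow> (x, s) \<in> R \<longrightarrow> s \<in> A}"

definition G_op :: "'a measure \<Rightarrow> 'l set \<Rightarrow> ('l \<Rightarrow> 'a \<Rightarrow> 'a measure) \<Rightarrow> 'a set set \<Rightarrow> 'a set set" where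
  "G_op M L \<tau> \<Lambda> = closed_sets M (RelT M L \<tau> \<Lambda>)"

text \<open>Ordinals are modelled by elements of an arbitrary well-ordered type 'i.\<close>
definition is_limit :: "'i::wellorder \<Rightarrow> bool" where
  "is_limit \<alpha> \<longleftrightarrow> (\<exists>\<beta>. \<beta> < \<alpha>) \<and> (\<forall>\<beta><\<alpha>. \<exists>\<gamma>. \<beta> < \<gamma> \<and> \<gamma> < \<alpha>)"

text \<open>Transfinite iterates: Sigma_0 at the least element, Sigma_{b+1} = G(Sigma_b) at successors,
  Sigma_lambda = sigma(union of earlier) at limits.\<close>
definition Sigma_iter :: "'a measure \<Rightarrow> 'l set \<Rightarrow> ('l \<Rightarrow> 'a \<Rightarrow> 'a measure) \<Rightarrow> 'a set set
     \<Rightarrow> 'i::wellorder \<Rightarrow> 'a set set" where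
  "Sigma_iter M L \<tau> \<Sigma>0 = wfrec {(x, y). x < y}
     (\<lambda>f \<alpha>. if \<not> (\<exists>\<beta>. \<beta> < \<alpha>) then \<Sigma>0
            else if is_limit \<alpha> then sigma_sets (space M) (\<Union>\<beta>\<in>{\<beta>. \<beta> < \<alpha>}. f \<beta>)
            else G_op M L \<tau> (f (THE \<beta>. \<beta> < \<alpha> \<and> (\<forall>\<gamma><\<alpha>. \<gamma> \<le> \<beta>))))"

definition stable :: "'a measure \<Rightarrow> 'l set \<Rightarrow> ('l \<Rightarrow> 'a \<Rightarrow> 'a measure) \<Rightarrow> 'a set set \<Rightarrow> bool" where
  "stable M L \<tau> \<Lambda> \<longleftrightarrow> \<Lambda> \<subseteq> sets M \<and>
     (\<forall>A\<in>\<Lambda>. \<forall>r\<in>\<rat>. 0 \<le> r \<longrightarrow> r \<le> 1 \<longrightarrow> (\<forall>a\<in>L.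
        {s \<in> space M. measure (\<tau> a s) A > r} \<in> \<Lambda>))"

end

theory Submission
  imports Defs "HOL-Probability.Conditional_Expectation"
begin

lemma pred_props:
  fixes \<alpha> :: "'i::wellorder"
  assumes "\<exists>\<beta>. \<beta> < \<alpha>" "\<not> is_limit \<alpha>"
  shows "(THE \<beta>. \<beta> < \<alpha> \<and> (\<forall>\<gamma><\<alpha>. \<gamma> \<le> \<beta>)) < \<alpha> \<and>
         (\<forall>\<gamma><\<alpha>. \<gamma> \<le> (THE \<beta>. \<beta> < \<alpha> \<and> (\<forall>\<gamma><\<alpha>. \<gamma> \<le> \<beta>)))"
proof -
  from assms obtain \<beta> where b: "\<beta> < \<alpha>" "\<forall>\<gamma><\<alpha>. \<gamma> \<le> \<beta>"
    unfolding is_limit_def by (meson not_le)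
  have "\<exists>!\<beta>. \<beta> < \<alpha> \<and> (\<forall>\<gamma><\<alpha>. \<gamma> \<le> \<beta>)"
    using b by (metis antisym)
  then show ?thesis by (rule theI')
qed

lemma Sigma_iter_eq:
  "Sigma_iter M L \<tau> \<Sigma>0 (\<alpha>::'i::wellorder) =
    (if \<not> (\<exists>\<beta>. \<beta> < \<alpha>) then \<Sigma>0
     else if is_limit \<alpha> then sigma_sets (space M) (\<Union>\<beta>\<in>{\<beta>. \<beta> < \<alpha>}. Sigma_iter M L \<tau> \<Sigma>0 \<beta>)
     else G_op M L \<tau> (Sigma_iter M L \<tau> \<Sigma>0 (THE \<beta>. \<beta> < \<alpha> \<and> (\<forall>\<gamma><\<alpha>. \<gamma> \<le> \<beta>))))"
proof -
  define H where "H = (\<lambda>f (\<alpha>::'i). if \<not> (\<exists>\<beta>. \<beta> < \<alpha>) then \<Sigma>0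
            else if is_limit \<alpha> then sigma_sets (space M) (\<Union>\<beta>\<in>{\<beta>. \<beta> < \<alpha>}. f \<beta>)
            else G_op M L \<tau> (f (THE \<beta>. \<beta> < \<alpha> \<and> (\<forall>\<gamma><\<alpha>. \<gamma> \<le> \<beta>))))"
  have e: "Sigma_iter M L \<tau> \<Sigma>0 = wfrec {(x,y). x<y} H" unfolding Sigma_iter_def H_def ..
  have 1: "Sigma_iter M L \<tau> \<Sigma>0 \<alpha> = H (cut (Sigma_iter M L \<tau> \<Sigma>0) {(x,y). x<y} \<alpha>) \<alpha>"
    unfolding e by (rule wfrec[OF wf])
  have 2: "(\<Union>\<beta>\<in>{\<beta>. \<beta> < \<alpha>}. cut (Sigma_iter M L \<tau> \<Sigma>0) {(x,y). x<y} \<alpha> \<beta>)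
      = (\<Union>\<beta>\<in>{\<beta>. \<beta> < \<alpha>}. Sigma_iter M L \<tau> \<Sigma>0 \<beta>)"
    by (rule SUP_cong) (auto simp: cut_apply)
  show ?thesis
    unfolding 1 H_def using pred_props[of \<alpha>] 2 by (simp add: cut_apply)
qed

lemma G_sigma: "sigma_algebra (space M) (G_op M L \<tau> \<Lambda>)"
  unfolding sigma_algebra_iff2
proof (intro conjI ballI allI impI)
  show "G_op M L \<tau> \<Lambda> \<subseteq> Pow (space M)"
    unfolding G_op_def closed_sets_def using sets.sets_into_space by auto
  show "{} \<in> G_op M L \<tau> \<Lambda>" unfolding G_op_def closed_sets_def by auto
next
  fix A assume A: "A \<in> G_op M L \<tau> \<Lambda>"
  show "space M - A \<in> G_op M L \<tau> \<Lambda>"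
    unfolding G_op_def closed_sets_def
  proof (safe)
    show "space M - A \<in> sets M" using A unfolding G_op_def closed_sets_def by auto
  next
    fix x s assume "x \<in> space M" "x \<notin> A" "(x, s) \<in> RelT M L \<tau> \<Lambda>"
    then show "s \<in> space M" unfolding RelT_def by auto
  next
    fix x s assume h: "x \<in> space M" "x \<notin> A" "(x, s) \<in> RelT M L \<tau> \<Lambda>" "s \<in> A"
    then have "(s, x) \<in> RelT M L \<tau> \<Lambda>" unfolding RelT_def by auto
    then show False using A h unfolding G_op_def closed_sets_def by auto
  qed
next
  fix A :: "nat \<Rightarrow> 'a set" assume A: "range A \<subseteq> G_op M L \<tau> \<Lambda>"
  then have "range A \<subseteq> sets M" unfolding G_op_def closed_sets_def by auto
  then have "(\<Union>i. A i) \<in> sets M" by auto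
  then show "(\<Union>i. A i) \<in> G_op M L \<tau> \<Lambda>"
    using A unfolding G_op_def closed_sets_def by blast
qed

lemma G_sub: "G_op M L \<tau> \<Lambda> \<subseteq> sets M"
  unfolding G_op_def closed_sets_def by auto

lemma G_mono: "\<Lambda> \<subseteq> \<Lambda>' \<Longrightarrow> G_op M L \<tau> \<Lambda> \<subseteq> G_op M L \<tau> \<Lambda>'"
  unfolding G_op_def closed_sets_def RelT_def by blast

lemma measure_meas:
  assumes "LMP M L \<tau>" "a \<in> L" "A \<in> sets M"
  shows "(\<lambda>s. measure (\<tau> a s) A) \<in> borel_measurable M"
proof -
  have "\<tau> a \<in> M \<rightarrow>\<^sub>M subprob_algebra M" using assms unfolding LMP_def by auto
  then show ?thesis using assms(3) by measurable
qed

lemma G_level: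
  assumes "LMP M L \<tau>" "a \<in> L" "A \<in> \<Lambda>" "\<Lambda> \<subseteq> sets M"
  shows "{s \<in> space M. c < measure (\<tau> a s) A} \<in> G_op M L \<tau> \<Lambda>"
proof -
  have "{s \<in> space M. c < measure (\<tau> a s) A} \<in> sets M"
  proof -
    have "A \<in> sets M" using assms by auto
    then show ?thesis using measure_meas[OF assms(1,2), of A] unfolding borel_measurable_iff_greater by blast
  qed
  then show ?thesis unfolding G_op_def closed_sets_def RelT_def using assms by auto
qed

lemma succ_eq:
  fixes \<beta> \<gamma> :: "'i::wellorder"
  assumes "\<beta> < \<gamma>" "\<forall>\<delta>. \<beta> < \<delta> \<longrightarrow> \<gamma> \<le> \<delta>"
  shows "Sigma_iter M L \<tau> \<Sigma>0 \<gamma> = G_op M L \<tau> (Sigma_iter M L \<tau> \<Sigma>0 \<beta>)"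
proof -
  have nl: "\<not> is_limit \<gamma>" using assms unfolding is_limit_def by (meson leD)
  have th: "(THE \<beta>'. \<beta>' < \<gamma> \<and> (\<forall>\<delta><\<gamma>. \<delta> \<le> \<beta>')) = \<beta>"
  proof (rule the_equality)
    show "\<beta> < \<gamma> \<and> (\<forall>\<delta><\<gamma>. \<delta> \<le> \<beta>)" using assms by (meson leD not_le)
  next
    fix b assume "b < \<gamma> \<and> (\<forall>\<delta><\<gamma>. \<delta> \<le> b)"
    then show "b = \<beta>" using assms by (meson antisym leD not_le)
  qed
  show ?thesis
    by (subst Sigma_iter_eq) (use assms nl th in auto)
qed

context
  fixes M :: "'a measure" and L :: "'l set" and \<tau> :: "'l \<Rightarrow> 'a \<Rightarrow> 'a measure"
    and \<Sigma>0 :: "'a set set"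
  assumes sa0: "sigma_algebra (space M) \<Sigma>0" and sub0: "\<Sigma>0 \<subseteq> sets M"
    and rel0: "Rel_of M \<Sigma>0 = RelT M L \<tau> \<Sigma>0"
begin

lemma main:
  fixes \<alpha> :: "'i::wellorder"
  shows "sigma_algebra (space M) (Sigma_iter M L \<tau> \<Sigma>0 \<alpha>) \<and> Sigma_iter M L \<tau> \<Sigma>0 \<alpha> \<subseteq> sets M
    \<and> Sigma_iter M L \<tau> \<Sigma>0 \<alpha> \<subseteq> G_op M L \<tau> (Sigma_iter M L \<tau> \<Sigma>0 \<alpha>)
    \<and> (\<forall>\<beta><\<alpha>. Sigma_iter M L \<tau> \<Sigma>0 \<beta> \<subseteq> Sigma_iter M L \<tau> \<Sigma>0 \<alpha>)"
proof (induction \<alpha> rule: less_induct)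
  case (less \<alpha>)
  let ?S = "Sigma_iter M L \<tau> \<Sigma>0"
  consider (z) "\<not>(\<exists>\<beta>. \<beta> < \<alpha>)" | (l) "\<exists>\<beta>. \<beta> < \<alpha>" "is_limit \<alpha>"
    | (s) "\<exists>\<beta>. \<beta> < \<alpha>" "\<not> is_limit \<alpha>" by blast
  then show ?case
  proof cases
    case z
    then have e: "?S \<alpha> = \<Sigma>0" by (subst Sigma_iter_eq) simp
    have "\<Sigma>0 \<subseteq> G_op M L \<tau> \<Sigma>0"
      using sub0 unfolding G_op_def closed_sets_def rel0[symmetric] Rel_of_def by auto
    then show ?thesis using e z sa0 sub0 by auto
  next
    case l
    let ?U = "\<Union>\<beta>\<in>{\<beta>. \<beta> < \<alpha>}. ?S \<beta>"
    have e: "?S \<alpha> = sigma_sets (space M) ?U" using l by (subst Sigma_iter_eq) simp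
    have U: "?U \<subseteq> sets M"
      by (rule UN_least) (use less in blast)
    then have Up: "?U \<subseteq> Pow (space M)" using sets.sets_into_space by auto
    have 1: "sigma_algebra (space M) (?S \<alpha>)" unfolding e using Up by (rule sigma_algebra_sigma_sets)
    have 2: "?S \<alpha> \<subseteq> sets M" unfolding e by (rule sets.sigma_sets_subset[OF U])
    have 3: "\<forall>\<beta><\<alpha>. ?S \<beta> \<subseteq> ?S \<alpha>" unfolding e by auto
    have "?U \<subseteq> G_op M L \<tau> (?S \<alpha>)"
    proof (intro UN_least)
      fix \<beta> assume "\<beta> \<in> {\<beta>. \<beta> < \<alpha>}"
      then have "?S \<beta> \<subseteq> G_op M L \<tau> (?S \<beta>)" "?S \<beta> \<subseteq> ?S \<alpha>" using less 3 by auto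
      then show "?S \<beta> \<subseteq> G_op M L \<tau> (?S \<alpha>)" using G_mono by blast
    qed
    then have "?S \<alpha> \<subseteq> G_op M L \<tau> (?S \<alpha>)"
      unfolding e[of] using sigma_algebra.sigma_sets_subset[OF G_sigma] by (metis e)
    then show ?thesis using 1 2 3 by auto
  next
    case s
    define p where "p = (THE \<beta>. \<beta> < \<alpha> \<and> (\<forall>\<gamma><\<alpha>. \<gamma> \<le> \<beta>))"
    have pp: "p < \<alpha>" "\<forall>\<gamma><\<alpha>. \<gamma> \<le> p" using pred_props[OF s] unfolding p_def by auto
    have e: "?S \<alpha> = G_op M L \<tau> (?S p)" using s unfolding p_def by (subst Sigma_iter_eq) simp
    have IH: "?S p \<subseteq> G_op M L \<tau> (?S p)" "\<forall>\<beta><p. ?S \<beta> \<subseteq> ?S p" using less pp by auto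
    have 3: "\<forall>\<beta><\<alpha>. ?S \<beta> \<subseteq> ?S \<alpha>"
    proof (intro allI impI)
      fix \<beta> assume "\<beta> < \<alpha>"
      then have "\<beta> = p \<or> \<beta> < p" using pp by (meson le_less)
      then show "?S \<beta> \<subseteq> ?S \<alpha>" using IH e by auto
    qed
    have "?S \<alpha> \<subseteq> G_op M L \<tau> (?S \<alpha>)" unfolding e
      by (rule G_mono) (use IH e in auto)
    then show ?thesis using 3 e G_sigma G_sub by metis
  qed
qed

end


theorem theorem3p15:
  fixes M :: "'a measure" and L :: "'l set" and \<tau> :: "'l \<Rightarrow> 'a \<Rightarrow> 'a measure"
    and \<Sigma>0 :: "'a set set" and lam :: "'i::wellorder"
  assumes "LMP M L \<tau>"
    and "sigma_algebra (space M) \<Sigma>0" and "\<Sigma>0 \<subseteq> sets M"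
    and "Rel_of M \<Sigma>0 = RelT M L \<tau> \<Sigma>0"
    and "is_limit lam"
  shows "sigma_algebra (space M) (Sigma_iter M L \<tau> \<Sigma>0 lam) \<and> stable M L \<tau> (Sigma_iter M L \<tau> \<Sigma>0 lam)"
proof -
  let ?S = "Sigma_iter M L \<tau> \<Sigma>0 :: 'i \<Rightarrow> _"
  let ?\<Omega> = "space M"
  note mn = main[OF assms(2,3,4)]
  let ?U = "\<Union>\<beta>\<in>{\<beta>. \<beta> < lam}. ?S \<beta>"
  have ex: "\<exists>\<beta>. \<beta> < lam" using assms(5) unfolding is_limit_def by auto
  have e: "?S lam = sigma_sets ?\<Omega> ?U" using ex assms(5) by (subst Sigma_iter_eq) simp
  have U: "?U \<subseteq> sets M" by (rule UN_least) (use mn in blast)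
  then have Up: "?U \<subseteq> Pow ?\<Omega>" using sets.sets_into_space by auto
  have sa: "sigma_algebra ?\<Omega> (?S lam)" using mn by blast
  have sub: "?S lam \<subseteq> sets M" using mn by blast
  obtain \<beta>0 where b0: "\<beta>0 < lam" using ex by auto
  have alg: "algebra ?\<Omega> (?S \<beta>)" for \<beta>
    using mn[of \<beta>] sigma_algebra.axioms(1) by blast
  have Om: "?\<Omega> \<in> ?U"
  proof -
    have "?\<Omega> \<in> ?S \<beta>0" using algebra.top[OF alg] .
    then show ?thesis using b0 by auto
  qed
  have IS: "Int_stable ?U"
    unfolding Int_stable_def
  proof (intro ballI)
    fix A B assume "A \<in> ?U" "B \<in> ?U"
    then obtain \<beta> \<gamma> where bg: "\<beta> < lam" "\<gamma> < lam" "A \<in> ?S \<beta>" "B \<in> ?S \<gamma>" by auto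
    have "\<exists>\<delta><lam. A \<in> ?S \<delta> \<and> B \<in> ?S \<delta>"
    proof (cases "\<beta> \<le> \<gamma>")
      case True
      then have "\<beta> = \<gamma> \<or> \<beta> < \<gamma>" by auto
      then show ?thesis using bg mn[of \<gamma>] by blast
    next
      case False
      then have "\<gamma> < \<beta>" by auto
      then show ?thesis using bg mn[of \<beta>] by blast
    qed
    then obtain \<delta> where d: "\<delta> < lam" "A \<in> ?S \<delta>" "B \<in> ?S \<delta>" by auto
    have "A \<inter> B \<in> ?S \<delta>" using algebra.Int_stable[OF alg[of \<delta>]] d
      unfolding Int_stable_def by blast
    then show "A \<inter> B \<in> ?U" using d by auto
  qed
  have lev: "{s \<in> ?\<Omega>. c < measure (\<tau> a s) B} \<in> ?U" if hB: "B \<in> ?U" and ha: "a \<in> L" for B a c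
  proof -
    obtain \<beta> where b: "\<beta> < lam" "B \<in> ?S \<beta>" using hB by blast
    obtain \<gamma> where g: "\<beta> < \<gamma>" "\<gamma> < lam" using assms(5) b unfolding is_limit_def by blast
    define \<gamma>0 where "\<gamma>0 = (LEAST \<delta>. \<beta> < \<delta>)"
    have g0: "\<beta> < \<gamma>0" unfolding \<gamma>0_def using g(1) by (metis LeastI)
    have g1: "\<forall>\<delta>. \<beta> < \<delta> \<longrightarrow> \<gamma>0 \<le> \<delta>" unfolding \<gamma>0_def by (auto intro: Least_le)
    have "\<gamma>0 < lam" using g g1 by (meson le_less_trans)
    moreover have "?S \<gamma>0 = G_op M L \<tau> (?S \<beta>)" by (rule succ_eq[OF g0 g1])
    moreover have "{s \<in> ?\<Omega>. c < measure (\<tau> a s) B} \<in> G_op M L \<tau> (?S \<beta>)"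
      by (rule G_level[OF assms(1) ha b(2)]) (use mn in blast)
    ultimately show ?thesis by auto
  qed
  define N where "N = sigma ?\<Omega> ?U"
  have sN: "sets N = ?S lam" unfolding N_def e using Up by (rule sets_measure_of)
  have spN: "space N = ?\<Omega>" unfolding N_def using Up by (rule space_measure_of)
  have meas: "(\<lambda>s. measure (\<tau> a s) A) \<in> borel_measurable N" if a: "a \<in> L" and A: "A \<in> ?S lam" for a A
  proof -
    have ta: "\<tau> a \<in> M \<rightarrow>\<^sub>M subprob_algebra M" using assms(1) a unfolding LMP_def by auto
    have tas: "subprob_space (\<tau> a s) \<and> sets (\<tau> a s) = sets M" if "s \<in> ?\<Omega>" for s
      using measurable_space[OF ta that] by (simp add: space_subprob_algebra)
    have spt: "space (\<tau> a s) = ?\<Omega>" if "s \<in> ?\<Omega>" for s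
      using tas[OF that] sets_eq_imp_space_eq by blast
    have subal: "subalgebra (\<tau> a s) N" if "s \<in> ?\<Omega>" for s
      unfolding subalgebra_def using spt[OF that] spN sN sub tas[OF that] by auto
    define K where "K s = restr_to_subalg (\<tau> a s) N" for s
    have eK: "emeasure (K s) B = ennreal (measure (\<tau> a s) B)" if "s \<in> ?\<Omega>" "B \<in> sets N" for s B
    proof -
      interpret subprob_space "\<tau> a s" using tas[OF that(1)] by auto
      show ?thesis unfolding K_def using emeasure_restr_to_subalg[OF subal[OF that(1)] that(2)]
        by (simp add: emeasure_eq_measure)
    qed
    have mU: "(\<lambda>s. emeasure (K s) B) \<in> borel_measurable N" if "B \<in> ?U" for B
    proof -
      have "(\<lambda>s. measure (\<tau> a s) B) \<in> borel_measurable N"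
        unfolding borel_measurable_iff_greater spN sN e using lev[OF that a] by auto
      then have m1: "(\<lambda>s. ennreal (measure (\<tau> a s) B)) \<in> borel_measurable N" by measurable
      have BN: "B \<in> sets N" using that sN e by auto
      have "(\<lambda>s. emeasure (K s) B) \<in> borel_measurable N \<longleftrightarrow> (\<lambda>s. ennreal (measure (\<tau> a s) B)) \<in> borel_measurable N"
        by (rule measurable_cong) (simp add: eK spN BN)
      then show ?thesis using m1 by simp
    qed
    have K: "K \<in> N \<rightarrow>\<^sub>M subprob_algebra N"
    proof (rule measurable_subprob_algebra_generated[where \<Omega>="?\<Omega>" and G="?U"])
      show "sets N = sigma_sets ?\<Omega> ?U" using sN e by simp
      show "Int_stable ?U" by (rule IS)
      show "?U \<subseteq> Pow ?\<Omega>" by (rule Up)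
    next
      fix s assume s: "s \<in> space N"
      then have s': "s \<in> ?\<Omega>" using spN by simp
      show "sets (K s) = sets N" unfolding K_def by (rule sets_restr_to_subalg[OF subal[OF s']])
      have "?\<Omega> \<in> sets N" using Om sN e by auto
      then have "emeasure (K s) ?\<Omega> = ennreal (measure (\<tau> a s) ?\<Omega>)" using eK s' by auto
      moreover have "measure (\<tau> a s) ?\<Omega> \<le> 1"
        using tas[OF s'] spt[OF s'] by (metis subprob_space.subprob_measure_le_1)
      moreover have "space (K s) = ?\<Omega>" unfolding K_def space_restr_to_subalg using spt[OF s'] .
      ultimately show "subprob_space (K s)" using s' by (intro subprob_spaceI) auto
    next
      fix B assume "B \<in> ?U" then show "(\<lambda>s. emeasure (K s) B) \<in> borel_measurable N" by (rule mU)
    next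
      show "(\<lambda>s. emeasure (K s) ?\<Omega>) \<in> borel_measurable N" by (rule mU[OF Om])
    qed
    have AN: "A \<in> sets N" using A sN by simp
    have "(\<lambda>s. measure (K s) A) \<in> borel_measurable N"
      using measurable_compose[OF K measurable_measure_subprob_algebra[OF AN]] .
    moreover have "measure (K s) A = measure (\<tau> a s) A" if "s \<in> space N" for s
      using eK[of s A] that spN AN unfolding measure_def by simp
    ultimately show ?thesis by (simp cong: measurable_cong)
  qed
  have st: "stable M L \<tau> (?S lam)"
    unfolding stable_def
  proof (intro conjI ballI allI impI)
    show "?S lam \<subseteq> sets M" by (rule sub)
  next
    fix A r a assume "A \<in> ?S lam" "a \<in> L"
    then show "{s \<in> ?\<Omega>. r < measure (\<tau> a s) A} \<in> ?S lam"
      using meas[of a A] unfolding borel_measurable_iff_greater spN sN by blast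
  qed
  show ?thesis using sa st by blast
qed

end
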